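(* Let $\mathcal T^*$ be an Aronszajn tree and let $B$ be an uncountable set of branches of $\mathcal T^*$ such that no two elements of $B$ have the same order type. Then there are incompatible elements $s,t\in\mathcal T^*$ such that both $\{b\in B:s\in b\}$ and $\{b\in B:t\in b\}$ are uncountable.
   Context: An Aronszajn tree is a tree of height $\omega_1$ all of whose levels are countable and which has no uncountable branch. A branch is a maximal linearly ordered subset. Two elements are incompatible if neither is below or equal to the other. *)

theory Defs
  imports Main "HOL-Library.Countable_Set"
begin

definition pred_set :: "'a set \<Rightarrow> 'a rel \<Rightarrow> 'a \<Rightarrow> 'a set" where
  "pred_set T R t = {s \<in> T. (s, t) \<in> R \<and> s \<noteq> t}"

text \<open>The height of a node, represented as the well-order of its strict predecessors
  (its order type is the height).\<close>
definition node_height :: "'a set \<Rightarrow> 'a rel \<Rightarrow> 'a \<Rightarrow> 'a rel" where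
  "node_height T R t = Restr R (pred_set T R t)"

definition is_tree :: "'a set \<Rightarrow> 'a rel \<Rightarrow> bool" where
  "is_tree T R \<longleftrightarrow> partial_order_on T R \<and>
     (\<forall>t\<in>T. Well_order (node_height T R t))"

definition tree_level :: "'a set \<Rightarrow> 'a rel \<Rightarrow> 'a \<Rightarrow> 'a set" where
  "tree_level T R t = {s \<in> T. (node_height T R s, node_height T R t) \<in> ordIso}"

text \<open>Height omega_1: every node has countable height, and every countable ordinal
  (= order type of a well-order on a subset of nat) is the height of some node.\<close>
definition height_omega1 :: "'a set \<Rightarrow> 'a rel \<Rightarrow> bool" where
  "height_omega1 T R \<longleftrightarrow>
     (\<forall>t\<in>T. countable (pred_set T R t)) \<and>
     (\<forall>W :: nat rel. Well_order W \<longrightarrow> (\<exists>t\<in>T. (node_height T R t, W) \<in> ordIso))"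

definition is_chain_in :: "'a set \<Rightarrow> 'a rel \<Rightarrow> 'a set \<Rightarrow> bool" where
  "is_chain_in T R c \<longleftrightarrow> c \<subseteq> T \<and> (\<forall>x\<in>c. \<forall>y\<in>c. (x, y) \<in> R \<or> (y, x) \<in> R)"

definition is_branch :: "'a set \<Rightarrow> 'a rel \<Rightarrow> 'a set \<Rightarrow> bool" where
  "is_branch T R b \<longleftrightarrow> is_chain_in T R b \<and>
     (\<forall>c. is_chain_in T R c \<and> b \<subseteq> c \<longrightarrow> c = b)"

definition aronszajn_tree :: "'a set \<Rightarrow> 'a rel \<Rightarrow> bool" where
  "aronszajn_tree T R \<longleftrightarrow> is_tree T R \<and> height_omega1 T R \<and>
     (\<forall>t\<in>T. countable (tree_level T R t)) \<and>
     (\<forall>b. is_branch T R b \<longrightarrow> countable b)"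

definition incompatible :: "'a rel \<Rightarrow> 'a \<Rightarrow> 'a \<Rightarrow> bool" where
  "incompatible R s t \<longleftrightarrow> (s, t) \<notin> R \<and> (t, s) \<notin> R"

end

theory Submission
  imports Defs
begin

lemma tree_basic:
  assumes "is_tree T R"
  shows "refl_on T R" "trans R" "antisym R"
  using assms unfolding is_tree_def partial_order_on_def preorder_on_def by auto

lemma tree_comp:
  assumes tr: "is_tree T R" and s: "s \<in> T" and x: "x \<in> T" and t: "t \<in> T"
    and st: "(s,t) \<in> R" and xt: "(x,t) \<in> R"
  shows "(s,x) \<in> R \<or> (x,s) \<in> R"
proof (cases "s = t \<or> x = t \<or> s = x")
  case True
  then show ?thesis using st xt s refl_onD[OF tree_basic(1)[OF tr]] by auto
next
  case False
  let ?W = "node_height T R t"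
  have W: "Well_order ?W" using tr t unfolding is_tree_def by auto
  have tot: "total_on (Field ?W) ?W"
    using W unfolding well_order_on_def linear_order_on_def by auto
  have "(s,s) \<in> ?W" "(x,x) \<in> ?W"
    using False s x st xt refl_onD[OF tree_basic(1)[OF tr]]
    unfolding node_height_def pred_set_def by auto
  then have "s \<in> Field ?W" "x \<in> Field ?W" by (auto simp: Field_def)
  then have "(s,x) \<in> ?W \<or> (x,s) \<in> ?W" using tot False unfolding total_on_def by blast
  then show ?thesis unfolding node_height_def by auto
qed

lemma tree_min:
  assumes tr: "is_tree T R" and ST: "S \<subseteq> T" and xS: "x \<in> S"
  shows "\<exists>m\<in>S. \<forall>y\<in>S. (y,m) \<in> R \<longrightarrow> y = m"
proof (cases "\<forall>y\<in>S. (y,x) \<in> R \<longrightarrow> y = x")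
  case True
  then show ?thesis using xS by blast
next
  case False
  then obtain y0 where y0: "y0 \<in> S" "(y0,x) \<in> R" "y0 \<noteq> x" by blast
  let ?W = "node_height T R x"
  have W: "Well_order ?W" using tr xS ST unfolding is_tree_def by auto
  have wf: "wf (?W - Id)" using W unfolding well_order_on_def by auto
  let ?Q = "S \<inter> pred_set T R x"
  have "y0 \<in> ?Q" using y0 ST unfolding pred_set_def by auto
  then obtain z where z: "z \<in> ?Q" and zmin: "\<forall>y. (y,z) \<in> ?W - Id \<longrightarrow> y \<notin> ?Q"
    using wf unfolding wf_eq_minimal by blast
  have "\<forall>y\<in>S. (y,z) \<in> R \<longrightarrow> y = z"
  proof (intro ballI impI, rule ccontr)
    fix y assume yS: "y \<in> S" and yz: "(y,z) \<in> R" and ne: "y \<noteq> z"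
    have zx: "(z,x) \<in> R" "z \<noteq> x" using z unfolding pred_set_def by auto
    have yx: "(y,x) \<in> R" using yz zx tree_basic(2)[OF tr] by (meson transD)
    have "y \<noteq> x"
    proof
      assume "y = x"
      then have "z = x" using yz zx tree_basic(3)[OF tr] by (meson antisymD)
      then show False using zx by auto
    qed
    then have "y \<in> ?Q" using yS yx ST unfolding pred_set_def by auto
    moreover have "(y,z) \<in> ?W - Id" using \<open>y \<in> ?Q\<close> z yz ne unfolding node_height_def by auto
    ultimately show False using zmin by blast
  qed
  then show ?thesis using z by blast
qed

lemma branch_down:
  assumes tr: "is_tree T R" and b: "is_branch T R b" and t: "t \<in> b" and s: "s \<in> T"
    and st: "(s,t) \<in> R"
  shows "s \<in> b"
proof -
  have ch: "is_chain_in T R b" using b unfolding is_branch_def by auto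
  have tT: "t \<in> T" using ch t unfolding is_chain_in_def by auto
  have "is_chain_in T R (insert s b)"
    unfolding is_chain_in_def
  proof (intro conjI ballI)
    show "insert s b \<subseteq> T" using ch s unfolding is_chain_in_def by auto
  next
    fix x y assume x: "x \<in> insert s b" and y: "y \<in> insert s b"
    have key: "(s,z) \<in> R \<or> (z,s) \<in> R" if z: "z \<in> b" for z
    proof -
      have zT: "z \<in> T" using ch z unfolding is_chain_in_def by auto
      have "(z,t) \<in> R \<or> (t,z) \<in> R" using ch z t unfolding is_chain_in_def by auto
      then show ?thesis
      proof
        assume "(z,t) \<in> R"
        then show ?thesis using tree_comp[OF tr s zT tT st] by auto
      next
        assume "(t,z) \<in> R"
        then have "(s,z) \<in> R" using st tree_basic(2)[OF tr] by (meson transD)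
        then show ?thesis by auto
      qed
    qed
    show "(x, y) \<in> R \<or> (y, x) \<in> R"
      using x y key ch s refl_onD[OF tree_basic(1)[OF tr]] unfolding is_chain_in_def by auto
  qed
  then have "insert s b = b" using b unfolding is_branch_def by blast
  then show ?thesis by auto
qed

theorem lemma4p7:
  fixes T :: "'a set" and R :: "'a rel" and B :: "'a set set"
  assumes "aronszajn_tree T R"
    and "\<forall>b\<in>B. is_branch T R b"
    and "uncountable B"
    and "\<forall>b1\<in>B. \<forall>b2\<in>B. b1 \<noteq> b2 \<longrightarrow> (Restr R b1, Restr R b2) \<notin> ordIso"
  shows "\<exists>s\<in>T. \<exists>t\<in>T. incompatible R s t \<and>
           uncountable {b \<in> B. s \<in> b} \<and> uncountable {b \<in> B. t \<in> b}"
proof (rule ccontr)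
  assume neg: "\<not> ?thesis"
  have tr: "is_tree T R" using assms(1) unfolding aronszajn_tree_def by auto
  have lev: "\<forall>t\<in>T. countable (tree_level T R t)" using assms(1) unfolding aronszajn_tree_def by auto
  have brc: "\<forall>b. is_branch T R b \<longrightarrow> countable b" using assms(1) unfolding aronszajn_tree_def by auto
  define U where "U = {t\<in>T. uncountable {b \<in> B. t \<in> b}}"
  have Uch: "is_chain_in T R U"
    unfolding is_chain_in_def
  proof (intro conjI ballI)
    show "U \<subseteq> T" unfolding U_def by auto
    fix x y assume x: "x \<in> U" and y: "y \<in> U"
    show "(x, y) \<in> R \<or> (y, x) \<in> R"
    proof (rule ccontr)
      assume "\<not> ((x, y) \<in> R \<or> (y, x) \<in> R)"
      then have "incompatible R x y" unfolding incompatible_def by auto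
      moreover have "x \<in> T" "y \<in> T" "uncountable {b \<in> B. x \<in> b}" "uncountable {b \<in> B. y \<in> b}"
        using x y unfolding U_def by simp_all
      ultimately show False using neg by blast
    qed
  qed
  have Udown: "s \<in> U" if "t \<in> U" "s \<in> T" "(s,t) \<in> R" for s t
  proof -
    have "{b \<in> B. t \<in> b} \<subseteq> {b \<in> B. s \<in> b}"
    proof
      fix b assume "b \<in> {b \<in> B. t \<in> b}"
      then have "b \<in> B" "t \<in> b" by simp_all
      then show "b \<in> {b \<in> B. s \<in> b}" using branch_down[OF tr _ _ that(2,3)] assms(2) by simp
    qed
    moreover have "uncountable {b \<in> B. t \<in> b}" using that unfolding U_def by simp
    ultimately have "uncountable {b \<in> B. s \<in> b}" using countable_subset by blast
    then show ?thesis using that(2) unfolding U_def by simp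
  qed
  \<comment> \<open>U is countable: extend to a branch\<close>
  define A where "A = {c. is_chain_in T R c \<and> U \<subseteq> c}"
  have "\<forall>C\<in>chains A. \<exists>V\<in>A. \<forall>X\<in>C. X \<subseteq> V"
  proof
    fix C assume C: "C \<in> chains A"
    show "\<exists>V\<in>A. \<forall>X\<in>C. X \<subseteq> V"
    proof (cases "C = {}")
      case True
      have "U \<in> A" using Uch unfolding A_def by simp
      then show ?thesis using True by blast
    next
      case False
      have CA: "C \<subseteq> A" using C unfolding chains_def by simp
      have chC: "\<And>X Y. X \<in> C \<Longrightarrow> Y \<in> C \<Longrightarrow> X \<subseteq> Y \<or> Y \<subseteq> X"
        using C unfolding chains_def chain_subset_def by simp
      have chX: "\<And>X. X \<in> C \<Longrightarrow> is_chain_in T R X \<and> U \<subseteq> X"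
        using CA unfolding A_def by blast
      have "is_chain_in T R (\<Union>C)"
        unfolding is_chain_in_def
      proof (intro conjI ballI)
        show "\<Union>C \<subseteq> T"
        proof
          fix x assume "x \<in> \<Union>C"
          then obtain X where "X \<in> C" "x \<in> X" by blast
          then show "x \<in> T" using chX[of X] unfolding is_chain_in_def by blast
        qed
        fix x y assume "x \<in> \<Union>C" "y \<in> \<Union>C"
        then obtain X Y where XY: "X \<in> C" "Y \<in> C" "x \<in> X" "y \<in> Y" by blast
        show "(x, y) \<in> R \<or> (y, x) \<in> R"
        proof (cases "X \<subseteq> Y")
          case True
          then have "x \<in> Y" using XY by blast
          then show ?thesis using chX[OF XY(2)] XY(4) unfolding is_chain_in_def by blast
        next
          case False
          then have "Y \<subseteq> X" using chC[OF XY(1,2)] by blast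
          then have "y \<in> X" using XY by blast
          then show ?thesis using chX[OF XY(1)] XY(3) unfolding is_chain_in_def by blast
        qed
      qed
      moreover have "U \<subseteq> \<Union>C"
      proof -
        obtain X0 where "X0 \<in> C" using False by blast
        then show ?thesis using chX[of X0] by blast
      qed
      ultimately have "\<Union>C \<in> A" unfolding A_def by simp
      then show ?thesis by blast
    qed
  qed
  from Zorn_Lemma2[OF this] obtain M where M: "M \<in> A" "\<forall>X\<in>A. M \<subseteq> X \<longrightarrow> X = M" by blast
  have MA: "is_chain_in T R M" "U \<subseteq> M" using M(1) unfolding A_def by simp_all
  have "is_branch T R M"
    unfolding is_branch_def
  proof (intro conjI allI impI)
    show "is_chain_in T R M" by (rule MA(1))
    fix c assume c: "is_chain_in T R c \<and> M \<subseteq> c"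
    then have "c \<in> A" using MA(2) unfolding A_def by blast
    then show "c = M" using M(2) c by blast
  qed
  then have "countable M" using brc by blast
  then have Ucnt: "countable U" using MA(2) countable_subset by blast
  define N where "N = {t\<in>T - U. pred_set T R t \<subseteq> U}"
  have Npred: "pred_set T R t \<in> insert U (pred_set T R ` U)" if tN: "t \<in> N" for t
  proof (cases "U \<subseteq> pred_set T R t")
    case True
    then show ?thesis using tN unfolding N_def by auto
  next
    case False
    then obtain u0 where "u0 \<in> U - pred_set T R t" by auto
    then obtain u where u: "u \<in> U - pred_set T R t"
      and umin: "\<forall>y\<in>U - pred_set T R t. (y,u) \<in> R \<longrightarrow> y = u"
      using tree_min[OF tr, of "U - pred_set T R t" u0] Uch unfolding is_chain_in_def by blast
    have tT: "t \<in> T" "t \<notin> U" using tN unfolding N_def by auto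
    have uT: "u \<in> T" using u Uch unfolding is_chain_in_def by auto
    have "pred_set T R t = pred_set T R u"
    proof
      show "pred_set T R t \<subseteq> pred_set T R u"
      proof
        fix w assume w: "w \<in> pred_set T R t"
        then have wU: "w \<in> U" using tN unfolding N_def by auto
        have wt: "w \<in> T" "(w,t) \<in> R" "w \<noteq> t" using w unfolding pred_set_def by auto
        have wu: "w \<noteq> u" using w u by auto
        have "(w,u) \<in> R \<or> (u,w) \<in> R" using Uch wU u unfolding is_chain_in_def by auto
        moreover have "(u,w) \<notin> R"
        proof
          assume "(u,w) \<in> R"
          then have "(u,t) \<in> R" using wt tree_basic(2)[OF tr] by (meson transD)
          moreover have "u \<noteq> t" using u tT by auto
          ultimately have "u \<in> pred_set T R t" using uT unfolding pred_set_def by auto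
          then show False using u by auto
        qed
        ultimately show "w \<in> pred_set T R u" using wt wu unfolding pred_set_def by auto
      qed
    next
      show "pred_set T R u \<subseteq> pred_set T R t"
      proof
        fix v assume v: "v \<in> pred_set T R u"
        then have vT: "v \<in> T" "(v,u) \<in> R" "v \<noteq> u" unfolding pred_set_def by auto
        then have "v \<in> U" using Udown u by auto
        then show "v \<in> pred_set T R t" using umin vT by auto
      qed
    qed
    then show ?thesis using u by auto
  qed
  have fib: "countable {t\<in>T. pred_set T R t = P}" for P
  proof (cases "{t\<in>T. pred_set T R t = P} = {}")
    case True then show ?thesis by (simp only: countable_empty)
  next
    case False
    then obtain t0 where t0: "t0 \<in> T" "pred_set T R t0 = P" by blast
    have W: "Well_order (node_height T R t0)" using tr t0(1) unfolding is_tree_def by blast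
    have "{t\<in>T. pred_set T R t = P} \<subseteq> tree_level T R t0"
    proof
      fix t assume "t \<in> {t\<in>T. pred_set T R t = P}"
      then have t: "t \<in> T" "pred_set T R t = P" by simp_all
      then have "node_height T R t = node_height T R t0" using t0(2) unfolding node_height_def by simp
      then have "(node_height T R t, node_height T R t0) \<in> ordIso" using ordIso_reflexive[OF W] by simp
      then show "t \<in> tree_level T R t0" using t(1) unfolding tree_level_def by simp
    qed
    moreover have "countable (tree_level T R t0)" using lev t0(1) by blast
    ultimately show ?thesis using countable_subset by blast
  qed
  have "N \<subseteq> (\<Union>P\<in>insert U (pred_set T R ` U). {t\<in>T. pred_set T R t = P})"
  proof
    fix t assume tN: "t \<in> N"
    then have "t \<in> T" unfolding N_def by simp
    then have "t \<in> {t'\<in>T. pred_set T R t' = pred_set T R t}" by simp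
    then show "t \<in> (\<Union>P\<in>insert U (pred_set T R ` U). {t\<in>T. pred_set T R t = P})"
      using Npred[OF tN] by blast
  qed
  moreover have "countable (\<Union>P\<in>insert U (pred_set T R ` U). {t\<in>T. pred_set T R t = P})"
    by (rule countable_UN) (use Ucnt fib in simp_all)
  ultimately have Ncnt: "countable N" by (rule countable_subset)
  have cover: "B \<subseteq> {U} \<union> (\<Union>t\<in>N. {b \<in> B. t \<in> b})"
  proof
    fix b assume bB: "b \<in> B"
    have br: "is_branch T R b" using assms(2) bB by blast
    have bch: "is_chain_in T R b" using br unfolding is_branch_def by blast
    have bT: "b \<subseteq> T" using bch unfolding is_chain_in_def by blast
    show "b \<in> {U} \<union> (\<Union>t\<in>N. {b \<in> B. t \<in> b})"
    proof (cases "b \<subseteq> U")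
      case True
      then have "U = b" using br Uch unfolding is_branch_def by blast
      then show ?thesis by simp
    next
      case False
      then obtain x where "x \<in> b - U" by blast
      then obtain m where m: "m \<in> b - U" and mmin: "\<forall>y\<in>b - U. (y,m) \<in> R \<longrightarrow> y = m"
        using tree_min[OF tr, of "b - U" x] bT by blast
      have "pred_set T R m \<subseteq> U"
      proof
        fix s assume "s \<in> pred_set T R m"
        then have s: "s \<in> T" "(s,m) \<in> R" "s \<noteq> m" unfolding pred_set_def by simp_all
        have "m \<in> b" using m by simp
        then have "s \<in> b" using branch_down[OF tr br _ s(1,2)] by simp
        then show "s \<in> U" using mmin s by blast
      qed
      moreover have "m \<in> T" "m \<notin> U" using m bT by blast+
      ultimately have "m \<in> N" unfolding N_def by simp
      moreover have "b \<in> {b \<in> B. m \<in> b}" using m bB by simp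
      ultimately show ?thesis by blast
    qed
  qed
  have "countable ({U} \<union> (\<Union>t\<in>N. {b \<in> B. t \<in> b}))"
  proof -
    have "countable {b \<in> B. t \<in> b}" if "t \<in> N" for t
    proof -
      have "t \<in> T" "t \<notin> U" using that unfolding N_def by simp_all
      then show ?thesis unfolding U_def by simp
    qed
    then have "countable (\<Union>t\<in>N. {b \<in> B. t \<in> b})" using Ncnt by (intro countable_UN) simp_all
    then show ?thesis by simp
  qed
  then have "countable B" using cover countable_subset by blast
  then show False using assms(3) by simp
qed

end
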